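(* Let $\mu\in\mathcal{L}$ and let $\alpha\neq\beta$ be atoms of $\mu$. Then \[ \min\big(\mu(\{\alpha\}),\mu(\{\beta\})\big)<\frac{2\pi}{|\alpha-\beta|}. \]
   Context: For a probability measure $\mu$ on $\mathbb{R}$, $G_\mu(z)=\int\frac{d\mu(x)}{z-x}$ and $F_\mu=1/G_\mu$ on the upper half-plane $\mathbb{C}^+$. $\mathcal{L}$ is the set of probability measures $\mu$ on $\mathbb{R}$ with $F_\mu(z+2\pi)=F_\mu(z)+2\pi$ for all $z\in\mathbb{C}^+$. *)

theory Defs
  imports "HOL-Probability.Probability"
begin

definition cauchy_G :: "real measure \<Rightarrow> complex \<Rightarrow> complex" where
  "cauchy_G M z = (LINT x|M. 1 / (z - complex_of_real x))"

definition cauchy_F :: "real measure \<Rightarrow> complex \<Rightarrow> complex" where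
  "cauchy_F M z = 1 / cauchy_G M z"

definition class_L :: "real measure set" where
  "class_L = {M. prob_space M \<and> sets M = sets borel \<and>
     (\<forall>z. 0 < Im z \<longrightarrow> cauchy_F M (z + complex_of_real (2 * pi)) = cauchy_F M z + complex_of_real (2 * pi))}"

end

theory Submission
  imports Defs
begin

lemma imG_bound:
  assumes P: "prob_space M" and S: "sets M = sets borel" and z: "Im z > 0"
  shows "- Im (cauchy_G M z) \<ge> measure M {c} * (Im z / (cmod (z - of_real c))\<^sup>2)"
proof -
  interpret prob_space M by fact
  define h where "h = (\<lambda>x::real. Im z / (cmod (z - of_real x))\<^sup>2)"
  have ne: "z - of_real x \<noteq> 0" for x using z by (auto simp: complex_eq_iff)
  have imv: "Im (1 / (z - of_real x)) = - h x" for x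
  proof -
    have "(cmod (z - of_real x))\<^sup>2 = (Re z - x) * (Re z - x) + Im z * Im z"
      using cmod_power2[of "z - of_real x"] by (simp add: power2_eq_square)
    thus ?thesis by (simp add: h_def Im_divide power2_eq_square)
  qed
  have meas: "f \<in> borel_measurable M" if "f \<in> borel_measurable borel" for f :: "real \<Rightarrow> real"
    using that measurable_cong_sets[OF S refl] by blast
  have hcont: "continuous_on UNIV h"
    unfolding h_def using ne by (intro continuous_intros) auto
  have hb: "h \<in> borel_measurable M" by (rule meas, rule borel_measurable_continuous_onI[OF hcont])
  have hbound: "norm (h x) \<le> 1 / Im z" for x
  proof -
    have "Im z \<le> cmod (z - of_real x)" using abs_Im_le_cmod[of "z - of_real x"] z by simp
    hence "(Im z)\<^sup>2 \<le> (cmod (z - of_real x))\<^sup>2" using z by (intro power_mono) auto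
    moreover have "cmod (z - of_real x) > 0" using ne by simp
    ultimately show ?thesis using z unfolding h_def
      by (simp add: field_simps power2_eq_square)
  qed
  have hint: "integrable M h"
    by (rule integrable_const_bound[where B="1/Im z"]) (use hbound hb in auto)
  have gcont: "continuous_on UNIV (\<lambda>x::real. 1 / (z - of_real x))"
    using ne by (intro continuous_intros) auto
  have gb: "(\<lambda>x::real. 1 / (z - of_real x)) \<in> borel_measurable M"
    using borel_measurable_continuous_onI[OF gcont] measurable_cong_sets[OF S refl] by blast
  have gbound: "norm (1 / (z - of_real x)) \<le> 1 / Im z" for x
  proof -
    have "Im z \<le> cmod (z - of_real x)" using abs_Im_le_cmod[of "z - of_real x"] z by simp
    thus ?thesis using z by (simp add: norm_divide divide_simps)
  qed
  have gint: "integrable M (\<lambda>x::real. 1 / (z - of_real x))"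
    by (rule integrable_const_bound[where B="1/Im z"]) (use gbound gb in auto)
  have "Im (cauchy_G M z) = (LINT x|M. Im (1 / (z - of_real x)))"
    unfolding cauchy_G_def by (rule integral_Im[symmetric, OF gint])
  also have "\<dots> = - (LINT x|M. h x)" by (simp add: imv)
  finally have eq: "- Im (cauchy_G M z) = (LINT x|M. h x)" by simp
  have cset: "{c} \<in> sets M" using S by simp
  have sp: "space M = UNIV" using sets_eq_imp_space_eq[OF S] by simp
  have "(LINT x|M. h c * indicator {c} x) \<le> (LINT x|M. h x)"
  proof (rule integral_mono)
    show "integrable M (\<lambda>x. h c * indicator {c} x)" using cset
      by (intro integrable_mult_right integrable_real_indicator) (auto simp: less_top[symmetric])
    show "integrable M h" by fact
    fix x show "h c * indicator {c} x \<le> h x"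
      by (cases "x = c") (auto simp: h_def z intro!: divide_nonneg_nonneg less_imp_le[OF z])
  qed
  moreover have "(LINT x|M. h c * indicator {c} x) = h c * measure M {c}"
    using cset by (simp add: sp)
  ultimately show ?thesis using eq by (simp add: h_def mult.commute sp)
qed

lemma F_nat:
  assumes L: "M \<in> class_L"
  shows "Im z > 0 \<Longrightarrow> cauchy_F M (z + of_real (2*pi*real n)) = cauchy_F M z + of_real (2*pi*real n)"
proof (induction n arbitrary: z)
  case 0 then show ?case by simp
next
  case (Suc n)
  have per: "\<And>w. 0 < Im w \<Longrightarrow> cauchy_F M (w + of_real (2*pi)) = cauchy_F M w + of_real (2*pi)"
    using L by (simp add: class_L_def)
  have eqn: "z + of_real (2*pi*real (Suc n)) = (z + of_real (2*pi*real n)) + of_real (2*pi)"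
    by (simp add: algebra_simps)
  have "cauchy_F M (z + of_real (2*pi*real (Suc n))) = cauchy_F M ((z + of_real (2*pi*real n)) + of_real (2*pi))"
    unfolding eqn ..
  also have "\<dots> = cauchy_F M (z + of_real (2*pi*real n)) + of_real (2*pi)"
    by (rule per) (use Suc.prems in simp)
  also have "\<dots> = cauchy_F M z + of_real (2*pi*real (Suc n))"
    using Suc by (simp add: algebra_simps)
  finally show ?case .
qed

lemma F_int:
  assumes L: "M \<in> class_L" and z: "Im z > 0"
  shows "cauchy_F M (z + of_real (2*pi*real_of_int k)) = cauchy_F M z + of_real (2*pi*real_of_int k)"
proof (cases "k \<ge> 0")
  case True
  define n where "n = nat k"
  have "k = int n" using True by (simp add: n_def)
  then show ?thesis using F_nat[OF L z, of n] by simp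
next
  case False
  define n where "n = nat (-k)"
  have k: "k = - int n" using False by (simp add: n_def)
  define z' where "z' = z - of_real (2*pi*real n)"
  have "Im z' > 0" using z by (simp add: z'_def)
  from F_nat[OF L this, of n] have "cauchy_F M z = cauchy_F M z' + of_real (2*pi*real n)"
    by (simp add: z'_def)
  then show ?thesis using k by (simp add: z'_def algebra_simps)
qed

theorem corollary5p15:
  fixes M :: "real measure" and \<alpha> \<beta> :: real
  assumes "M \<in> class_L"
    and "\<alpha> \<noteq> \<beta>"
    and "measure M {\<alpha>} > 0"
    and "measure M {\<beta>} > 0"
  shows "min (measure M {\<alpha>}) (measure M {\<beta>}) < 2 * pi / \<bar>\<alpha> - \<beta>\<bar>"
proof (rule ccontr)
  note L = assms(1)
  have P: "prob_space M" and S: "sets M = sets borel" using L by (auto simp: class_L_def)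
  interpret prob_space M by fact
  define mA where "mA = measure M {\<alpha>}"
  define mB where "mB = measure M {\<beta>}"
  define m where "m = min mA mB"
  have mA0: "mA > 0" and mB0: "mB > 0" using assms by (auto simp: mA_def mB_def)
  have "measure M ({\<alpha>} \<union> {\<beta>}) = mA + mB"
    unfolding mA_def mB_def using assms(2) S by (intro finite_measure_Union) auto
  moreover have "measure M ({\<alpha>} \<union> {\<beta>}) \<le> 1" by (rule prob_le_1)
  ultimately have sum1: "mA + mB \<le> 1" by simp
  have m0: "m > 0" and mle: "m \<le> 1/2" and mAm: "m \<le> mA" and mBm: "m \<le> mB"
    using mA0 mB0 sum1 by (auto simp: m_def)
  define d where "d = \<beta> - \<alpha>"
  have dpos: "\<bar>d\<bar> > 0" using assms(2) by (simp add: d_def)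
  assume "\<not> ?thesis"
  hence "2 * pi / \<bar>\<alpha> - \<beta>\<bar> \<le> m" unfolding m_def mA_def mB_def by (simp only: not_less)
  moreover have "\<bar>\<alpha> - \<beta>\<bar> = \<bar>d\<bar>" by (simp add: d_def abs_minus_commute)
  ultimately have "2 * pi / \<bar>d\<bar> \<le> m" by simp
  hence big: "2 * pi \<le> m * \<bar>d\<bar>" using dpos by (simp add: divide_le_eq)
  define k where "k = \<lfloor>d / (2*pi) + 1/2\<rfloor>"
  have k1: "real_of_int k \<le> d / (2*pi) + 1/2" unfolding k_def by linarith
  have k2: "d / (2*pi) + 1/2 < real_of_int k + 1" unfolding k_def by linarith
  have k1': "2*pi*real_of_int k \<le> d + pi" using k1 pi_gt_zero by (simp add: field_simps)
  have k2': "d - pi < 2*pi*real_of_int k" using k2 pi_gt_zero by (simp add: field_simps)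
  define e where "e = \<alpha> + 2*pi*real_of_int k - \<beta>"
  have eb: "e\<^sup>2 \<le> pi\<^sup>2"
  proof -
    have "\<bar>e\<bar> \<le> pi" using k1' k2' by (simp add: e_def d_def)
    thus ?thesis by (metis abs_ge_zero power2_abs power_mono)
  qed
  have kb: "\<bar>2*pi*real_of_int k\<bar> \<ge> \<bar>d\<bar> - pi" using k1' k2' by linarith
  define y where "y = mA * pi / 4"
  have y0: "y > 0" using mA0 by (simp add: y_def)
  have yb: "y \<le> pi / 4" using sum1 mB0 by (simp add: y_def)
  define z where "z = Complex \<alpha> y"
  have z0: "Im z > 0" using y0 by (simp add: z_def)
  define g1 where "g1 = cauchy_G M z"
  have "- Im g1 \<ge> mA * (Im z / (cmod (z - of_real \<alpha>))\<^sup>2)"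
    unfolding g1_def mA_def by (rule imG_bound[OF P S z0])
  moreover have "cmod (z - of_real \<alpha>) = y" using y0 by (simp add: z_def cmod_def)
  ultimately have "- Im g1 \<ge> mA * (y / y\<^sup>2)" by (simp add: z_def)
  also have "mA * (y / y\<^sup>2) = 4 / pi" using mA0 by (simp add: y_def power2_eq_square field_simps)
  finally have g1b: "- Im g1 \<ge> 4 / pi" .
  have g1n: "cmod g1 \<ge> 4 / pi" using g1b abs_Im_le_cmod[of g1] by linarith
  have Fz: "cauchy_F M z = 1 / g1" by (simp add: cauchy_F_def g1_def)
  have Fzb: "cmod (cauchy_F M z) \<le> pi / 4"
  proof -
    have cg0: "cmod g1 > 0" using g1n pi_gt_zero by (smt (verit) divide_pos_pos)
    hence "cmod (cauchy_F M z) = 1 / cmod g1" by (simp add: Fz norm_divide)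
    also have "\<dots> \<le> 1 / (4 / pi)" using g1n pi_gt_zero cg0 by (intro divide_left_mono) auto
    finally show ?thesis by simp
  qed
  have ImFz: "Im (cauchy_F M z) \<le> pi / 4" using Fzb abs_Im_le_cmod[of "cauchy_F M z"] by linarith
  define w where "w = z + of_real (2*pi*real_of_int k)"
  have Fw: "cauchy_F M w = cauchy_F M z + of_real (2*pi*real_of_int k)"
    unfolding w_def by (rule F_int[OF L z0])
  have w0: "Im w > 0" using z0 by (simp add: w_def)
  define g2 where "g2 = cauchy_G M w"
  have wb: "(cmod (w - of_real \<beta>))\<^sup>2 = e\<^sup>2 + y\<^sup>2"
    by (simp add: w_def z_def e_def cmod_power2)
  have "- Im g2 \<ge> mB * (Im w / (cmod (w - of_real \<beta>))\<^sup>2)"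
    unfolding g2_def mB_def by (rule imG_bound[OF P S w0])
  hence g2b: "- Im g2 \<ge> mB * (y / (e\<^sup>2 + y\<^sup>2))" using wb by (simp add: w_def z_def)
  have ey0: "e\<^sup>2 + y\<^sup>2 > 0" using y0 by (simp add: add_nonneg_pos)
  have "mB * (y / (e\<^sup>2 + y\<^sup>2)) > 0" using mB0 y0 ey0 by simp
  hence g2ne: "g2 \<noteq> 0" using g2b by auto
  define N where "N = cmod (cauchy_F M w)"
  have g2F: "g2 = 1 / cauchy_F M w" using g2ne by (simp add: cauchy_F_def g2_def)
  have Fwne: "cauchy_F M w \<noteq> 0" using g2ne g2F by auto
  have N0: "N > 0" using Fwne by (simp add: N_def)
  have "- Im g2 = Im (cauchy_F M w) / N\<^sup>2"
    using g2F by (simp add: N_def Im_divide cmod_power2)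
  also have "Im (cauchy_F M w) = Im (cauchy_F M z)" by (simp add: Fw)
  finally have "Im (cauchy_F M z) / N\<^sup>2 \<ge> mB * (y / (e\<^sup>2 + y\<^sup>2))" using g2b by simp
  hence "(pi/4) / N\<^sup>2 \<ge> mB * (y / (e\<^sup>2 + y\<^sup>2))" using ImFz N0
    by (smt (verit) divide_right_mono zero_le_power2)
  hence "(pi/4) * (e\<^sup>2 + y\<^sup>2) \<ge> mB * y * N\<^sup>2" using N0 ey0
    by (simp add: field_simps)
  hence "(pi/4) * (mA * mB * N\<^sup>2) \<le> (pi/4) * (e\<^sup>2 + y\<^sup>2)"
    by (simp add: y_def algebra_simps)
  hence key: "e\<^sup>2 + y\<^sup>2 \<ge> mA * mB * N\<^sup>2" using pi_gt_zero
    by (simp add: mult_le_cancel_left_pos)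
  have Nb: "N \<ge> \<bar>d\<bar> - pi - pi/4"
  proof -
    have "cmod (of_real (2*pi*real_of_int k) :: complex) \<le> N + cmod (cauchy_F M z)"
      using norm_triangle_ineq4[of "cauchy_F M w" "cauchy_F M z"] by (simp add: N_def Fw)
    moreover have "cmod (of_real (2*pi*real_of_int k) :: complex) = \<bar>2*pi*real_of_int k\<bar>"
      by (rule norm_of_real)
    ultimately show ?thesis using kb Fzb by linarith
  qed
  have "m * \<bar>d\<bar> \<le> (1/2) * \<bar>d\<bar>" using mle by (intro mult_right_mono) auto
  hence dbig: "\<bar>d\<bar> \<ge> 4 * pi" using big by linarith
  have mN: "m * N \<ge> 11 * pi / 8"
  proof -
    have "m * N \<ge> m * (\<bar>d\<bar> - 5 * pi / 4)" using Nb m0 by (intro mult_left_mono) auto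
    also have "m * (\<bar>d\<bar> - 5 * pi / 4) = m * \<bar>d\<bar> - m * (5*pi/4)" by (simp add: algebra_simps)
    moreover have "m * (5*pi/4) \<le> (1/2) * (5*pi/4)" using mle pi_gt_zero by (intro mult_right_mono) auto
    ultimately show ?thesis using big by linarith
  qed
  have "(11 * pi / 8)\<^sup>2 \<le> (m * N)\<^sup>2" using mN pi_gt_zero by (intro power_mono) auto
  also have "(m * N)\<^sup>2 = (m * m) * N\<^sup>2" by (simp add: power2_eq_square)
  also have "\<dots> \<le> (mA * mB) * N\<^sup>2"
    using mAm mBm m0 by (intro mult_right_mono mult_mono) auto
  also have "\<dots> \<le> e\<^sup>2 + y\<^sup>2" using key by simp
  also have "\<dots> \<le> pi\<^sup>2 + (pi/4)\<^sup>2" using eb yb y0 by (intro add_mono[OF eb] power_mono) auto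
  finally show False using pi_gt_zero by (simp add: power2_eq_square field_simps)
qed

end
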